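(* Let $X=(x_{i,j})$ and $Y=(y_{i,j})$ be arbitrary elements of $FT_n(M)$. (i) $v_M(X)=+\infty$ if and only if $X$ is diagonal. (ii) $\tilde v_M(X)\ge v_M(X)$. (iii) For any $i,j\in\mathbb F_p$, $v_M(iX+jY)\ge\min(v_M(X),v_M(Y))$ and $\tilde v_M(iX+jY)\ge\min(\tilde v_M(X),\tilde v_M(Y))$; in particular adding integer multiples of $I$ does not change $v_M$ or $\tilde v_M$. (iv) $v_M(X^{(p)})=p\,v_M(X)$ and $\tilde v_M(X^{(p)})=p\,\tilde v_M(X)$. (v) $v_M(XY)\ge\min(v_M(X),v_M(Y))$ and $\tilde v_M(XY)\ge\min(\tilde v_M(X),\tilde v_M(Y))$. (vi) If $X$ is nilpotent (i.e. not invertible), then $v_M(XY)\ge\min(v_M(X),\tilde v_M(Y))$ and $v_M(YX)\ge\min(v_M(X),\tilde v_M(Y))$. (vii) If $X$ and $Y$ are both nilpotent, then $v_M(XY)\ge\min(\tilde v_M(X),\tilde v_M(Y))$. (viii) If $X$ is invertible and $v_M(X)>v_M(Y)$, then $v_M(XY)=v_M(YX)=v_M(Y)$. (ix) If $X$ is invertible and $\tilde v_M(X)>\tilde v_M(Y)$, then $\tilde v_M(XY)=\tilde v_M(YX)=\tilde v_M(Y)$. (x) If $X$ is invertible, then $v_M(X^{-1})=v_M(X)$ and $\tilde v_M(X^{-1})=\tilde v_M(X)$. (xi) Let $c$ be an integer, suppose $X$ is nilpotent, and let $\gamma\in M$ with $v_M(\gamma)=c$. Then $v_M(\gamma X)\ge\min\big(\tfrac{c}{n-1},c\big)+v_M(X)$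 and (when $n\ge3$) $\tilde v_M(\gamma X)\ge\min\big(\tfrac{c}{n-2},c\big)+\tilde v_M(X)$.
   Context: Let $p$ be a prime and $M$ a discrete valuation field of characteristic $p$ with valuation $v_M$ (and $v_M(0)=+\infty$). Let $n\ge2$. $NT_n(M)$ denotes the strictly upper triangular $n\times n$ matrices over $M$, and $FT_n(M)=\{cI+X: c\in\mathbb F_p,\ X\in NT_n(M)\}$, a subring of $M_n(M)$ consisting of upper triangular matrices whose diagonal entries are all equal to one element of $\mathbb F_p$. For $X=(x_{i,j})\in FT_n(M)$ define $v_M(X)=\min_{1\le i<j\le n}\frac{v_M(x_{i,j})}{j-i}$ and $\tilde v_M(X)=\min_{1\le i<j\le n,\ (i,j)\ne(1,n)}\frac{v_M(x_{i,j})}{j-i}$ (values in $\mathbb Q\cup\{+\infty\}$). $X^{(p)}$ denotes the matrix obtained by raising every entry of $X$ to the $p$-th power. *)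

theory Defs
  imports "HOL-Library.Extended_Real" "Jordan_Normal_Form.Matrix"
begin

definition discrete_valuation :: "('a::field \<Rightarrow> ereal) \<Rightarrow> bool" where
  "discrete_valuation v \<longleftrightarrow>
     (\<forall>x. v x = \<infinity> \<longleftrightarrow> x = 0) \<and>
     (\<forall>x. x \<noteq> 0 \<longrightarrow> (\<exists>k::int. v x = ereal (of_int k))) \<and>
     (\<forall>x y. v (x * y) = v x + v y) \<and>
     (\<forall>x y. min (v x) (v y) \<le> v (x + y)) \<and>
     (\<forall>k::int. \<exists>x. v x = ereal (of_int k))"

text \<open>FT_n(M): n x n upper triangular matrices whose diagonal entries all equal one
  element of the prime field F_p (= the image of the naturals in M).\<close>
definition FT :: "nat \<Rightarrow> 'a::field mat set" where
  "FT n = {X \<in> carrier_mat n n.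
             (\<exists>c::nat. \<forall>i<n. X $$ (i, i) = of_nat c) \<and>
             (\<forall>i j. j < i \<and> i < n \<longrightarrow> X $$ (i, j) = 0)}"

text \<open>Indices are 0-based: the paper's entry (i,j) is our (i-1,j-1); the corner (1,n) is (0,n-1).
  The minimum over an empty index set is +infinity.\<close>
definition vM :: "('a::field \<Rightarrow> ereal) \<Rightarrow> nat \<Rightarrow> 'a mat \<Rightarrow> ereal" where
  "vM v n X = (INF ij \<in> {(i, j). i < j \<and> j < n}.
                 v (X $$ ij) / ereal (real (snd ij - fst ij)))"

definition vMt :: "('a::field \<Rightarrow> ereal) \<Rightarrow> nat \<Rightarrow> 'a mat \<Rightarrow> ereal" where
  "vMt v n X = (INF ij \<in> {(i, j). i < j \<and> j < n \<and> (i, j) \<noteq> (0, n - 1)}.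
                 v (X $$ ij) / ereal (real (snd ij - fst ij)))"

definition frob_mat :: "nat \<Rightarrow> 'a::field mat \<Rightarrow> 'a mat" where
  "frob_mat p X = map_mat (\<lambda>x. x ^ p) X"

definition nilpotent_mat :: "'a::field mat \<Rightarrow> bool" where
  "nilpotent_mat X \<longleftrightarrow> (\<exists>k. X ^\<^sub>m k = 0\<^sub>m (dim_row X) (dim_col X))"

definition is_diagonal_mat :: "'a::zero mat \<Rightarrow> bool" where
  "is_diagonal_mat X \<longleftrightarrow> (\<forall>i<dim_row X. \<forall>j<dim_col X. i \<noteq> j \<longrightarrow> X $$ (i, j) = 0)"

end

theory Submission imports Defs "HOL-Number_Theory.Cong" begin

lemma dv_zero: "discrete_valuation v \<Longrightarrow> v 0 = \<infinity>"
  unfolding discrete_valuation_def by blast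
lemma dv_mult: "discrete_valuation v \<Longrightarrow> v (x * y) = v x + v y"
  unfolding discrete_valuation_def by blast
lemma dv_add: "discrete_valuation v \<Longrightarrow> min (v x) (v y) \<le> v (x + y)"
  unfolding discrete_valuation_def by blast
lemma dv_inf: "discrete_valuation v \<Longrightarrow> v x = \<infinity> \<longleftrightarrow> x = 0"
  unfolding discrete_valuation_def by blast
lemma dv_fin: "discrete_valuation v \<Longrightarrow> x \<noteq> 0 \<Longrightarrow> \<exists>k::int. v x = ereal (of_int k)"
  unfolding discrete_valuation_def by blast
lemma dv_ninf: "discrete_valuation v \<Longrightarrow> v x \<noteq> -\<infinity>"
  by (metis dv_fin dv_inf MInfty_neq_PInfty(1) MInfty_neq_ereal(2))
lemma dv_one: "discrete_valuation v \<Longrightarrow> v 1 = 0"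
proof -
  assume d: "discrete_valuation v"
  have "v 1 = v 1 + v 1" using dv_mult[OF d, of 1 1] by simp
  moreover obtain k::int where "v 1 = ereal k" using dv_fin[OF d, of 1] by auto
  ultimately show ?thesis by (simp add: zero_ereal_def)
qed
lemma dv_m1: "discrete_valuation v \<Longrightarrow> v (-1) = 0"
proof -
  assume d: "discrete_valuation v"
  have "v 1 = v (-1) + v (-1)" using dv_mult[OF d, of "-1" "-1"] by simp
  moreover obtain k::int where "v (-1) = ereal k" using dv_fin[OF d, of "-1"] by auto
  ultimately show ?thesis using dv_one[OF d] by (simp add: zero_ereal_def)
qed
lemma dv_uminus: "discrete_valuation v \<Longrightarrow> v (- x) = v x"
  using dv_mult[of v "-1" x] dv_m1[of v] by simp
lemma dv_nat: "discrete_valuation v \<Longrightarrow> 0 \<le> v (of_nat a)"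
proof (induction a)
  case 0 then show ?case using dv_zero[OF "0"] by simp
next
  case (Suc a)
  have "min (v 1) (v (of_nat a)) \<le> v (1 + of_nat a)" using dv_add[OF Suc.prems] .
  then show ?case using Suc dv_one[OF Suc.prems] by (simp add: min_def split: if_splits)
qed
lemma dv_nat_mult: "discrete_valuation v \<Longrightarrow> v x \<le> v (of_nat a * x)"
  using dv_mult[of v "of_nat a" x] dv_nat[of v a]
  by (metis add.commute add_increasing2 order_refl)
lemma dv_nat_mult2: "discrete_valuation v \<Longrightarrow> v x \<le> v (x * of_nat a)"
  using dv_nat_mult[of v x a] by (simp add: mult.commute)
lemma dv_strict: "discrete_valuation v \<Longrightarrow> v x < v y \<Longrightarrow> v (x + y) = v x"
proof -
  assume d: "discrete_valuation v" and l: "v x < v y"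
  have 1: "min (v x) (v y) \<le> v (x + y)" using dv_add[OF d] .
  have "min (v (x+y)) (v (-y)) \<le> v ((x + y) + (-y))" using dv_add[OF d] .
  then have "min (v (x+y)) (v y) \<le> v x" using dv_uminus[OF d] by simp
  then show ?thesis using 1 l by (auto simp: min_def split: if_splits)
qed
lemma dv_sum: assumes d: "discrete_valuation v" shows "finite S \<Longrightarrow> (\<forall>k\<in>S. w \<le> v (f k)) \<Longrightarrow> w \<le> v (sum f S)"
proof (induction S rule: finite_induct)
  case empty then show ?case using dv_zero[OF d] by simp
next
  case (insert x F)
  then have "w \<le> min (v (f x)) (v (sum f F))" by auto
  also have "\<dots> \<le> v (f x + sum f F)" using dv_add[OF d] .
  finally show ?case using insert by simp
qed
lemma dv_pow: "discrete_valuation v \<Longrightarrow> v (x ^ k) = ereal (real k) * v x"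
proof (induction k)
  case 0 then show ?case using dv_one[OF "0"] by (simp flip: zero_ereal_def)
next
  case (Suc k)
  have "v (x ^ Suc k) = v x + ereal (real k) * v x" using Suc dv_mult[OF Suc.prems, of x "x^k"] by simp
  also have "\<dots> = ereal (real (Suc k)) * v x"
    using dv_ninf[OF Suc.prems, of x]
    by (cases "v x") (auto simp: algebra_simps)
  finally show ?case .
qed
lemma dv_nat0:
  assumes d: "discrete_valuation v" and p: "prime p" and ch: "CHAR('a::field) = p"
    and nz: "(of_nat a :: 'a) \<noteq> 0"
  shows "v (of_nat a :: 'a) = 0"
proof -
  have "\<not> p dvd a" using nz ch of_nat_eq_0_iff_char_dvd by metis
  then have "coprime a p" using p by (metis coprime_commute prime_imp_coprime)
  then obtain b where "[a * b = Suc 0] (mod p)" using cong_solve_coprime_nat by blast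
  then have "(a * b) mod p = 1" using prime_gt_1_nat[OF p] by (simp add: cong_def)
  then have "a * b = p * (a * b div p) + 1" by (metis div_mult_mod_eq add.commute mult.commute)
  then have "(of_nat (a * b) :: 'a) = of_nat p * of_nat (a * b div p) + 1"
    by (metis of_nat_1 of_nat_add of_nat_mult)
  moreover have "(of_nat p :: 'a) = 0" using ch of_nat_CHAR by metis
  ultimately have "(of_nat a :: 'a) * of_nat b = 1" by simp
  then have "v (of_nat a :: 'a) + v (of_nat b) = 0" using dv_mult[OF d] dv_one[OF d] by metis
  moreover have "0 \<le> v (of_nat a :: 'a)" "0 \<le> v (of_nat b :: 'a)" using dv_nat[OF d] by auto
  ultimately show ?thesis
    by (cases "v (of_nat a :: 'a)"; cases "v (of_nat b :: 'a)") auto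
qed

definition W :: "('a::field \<Rightarrow> ereal) \<Rightarrow> nat \<Rightarrow> (nat \<Rightarrow> nat \<Rightarrow> bool) \<Rightarrow> 'a mat \<Rightarrow> ereal" where
  "W v n P X = (INF ij \<in> {(i, j). i < j \<and> j < n \<and> P i j}.
                 v (X $$ ij) / ereal (real (snd ij - fst ij)))"

lemma vM_W: "vM v n X = W v n (\<lambda>i j. True) X"
  unfolding vM_def W_def by simp
lemma vMt_W: "vMt v n X = W v n (\<lambda>i j. (i, j) \<noteq> (0, n - 1)) X"
  unfolding vMt_def W_def by simp

lemma W_ge_iff:
  "t \<le> W v n P X \<longleftrightarrow> (\<forall>i j. i < j \<longrightarrow> j < n \<longrightarrow> P i j \<longrightarrow> ereal (real (j - i)) * t \<le> v (X $$ (i, j)))"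
  unfolding W_def le_INF_iff
  by (auto simp: ereal_le_divide_pos)

lemma W_entry: "i < j \<Longrightarrow> j < n \<Longrightarrow> P i j \<Longrightarrow> ereal (real (j - i)) * W v n P X \<le> v (X $$ (i, j))"
  using W_ge_iff[of "W v n P X" v n P X] by auto

lemma W_le: "i < j \<Longrightarrow> j < n \<Longrightarrow> P i j \<Longrightarrow> v (X $$ (i, j)) \<le> ereal (real (j - i)) * t \<Longrightarrow> W v n P X \<le> t"
proof -
  assume a: "i < j" "j < n" "P i j" "v (X $$ (i, j)) \<le> ereal (real (j - i)) * t"
  have "W v n P X \<le> v (X $$ (i, j)) / ereal (real (j - i))"
    unfolding W_def by (rule INF_lower2[of "(i,j)"]) (use a in auto)
  also have "\<dots> \<le> t" using a by (subst ereal_divide_le_pos) auto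
  finally show ?thesis .
qed

lemma W_attain: "W v n P X = \<infinity> \<or> (\<exists>i j. i < j \<and> j < n \<and> P i j \<and> ereal (real (j - i)) * W v n P X = v (X $$ (i, j)))"
proof (cases "{(i, j). i < j \<and> j < n \<and> P i j} = {}")
  case True have "W v n P X = \<infinity>" unfolding W_def True by (simp add: top_ereal_def)
  then show ?thesis by simp
next
  case False
  let ?S = "{(i, j). i < j \<and> j < n \<and> P i j}"
  let ?f = "\<lambda>ij. v (X $$ ij) / ereal (real (snd ij - fst ij))"
  have fin: "finite ?S" by (rule finite_subset[of _ "{..<n} \<times> {..<n}"]) auto
  have "W v n P X = Min (?f ` ?S)" unfolding W_def using fin False by (simp add: cInf_eq_Min)
  moreover have "Min (?f ` ?S) \<in> ?f ` ?S" using fin False by (intro Min_in) auto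
  ultimately obtain i j where ij: "i < j" "j < n" "P i j" "W v n P X = v (X $$ (i,j)) / ereal (real (j - i))" by auto
  then have "ereal (real (j - i)) * W v n P X = v (X $$ (i, j))"
    by (cases "v (X $$ (i,j))") (auto simp: field_simps)
  then show ?thesis using ij by blast
qed

lemma W_ninf: "discrete_valuation v \<Longrightarrow> W v n P X \<noteq> -\<infinity>"
proof -
  assume d: "discrete_valuation v"
  show ?thesis
  proof
    assume m: "W v n P X = -\<infinity>"
    then obtain i j where "i < j" "ereal (real (j - i)) * W v n P X = v (X $$ (i, j))"
      using W_attain[of v n P X] by auto
    then have "v (X $$ (i, j)) = -\<infinity>" using m by auto
    then show False using dv_ninf[OF d] by blast
  qed
qed

lemma E1: "ereal (real (a + b)) * min s t \<le> ereal (real a) * s + ereal (real b) * t"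
proof (cases "a + b = 0")
  case True then show ?thesis by (simp flip: zero_ereal_def)
next
  case False
  then have "real a + real b \<noteq> 0" by linarith
  then show ?thesis
    using mult_right_mono[of _ _ "real a"] mult_right_mono[of _ _ "real b"]
    by (cases s; cases t) (auto simp: min_def algebra_simps)
qed

lemma E2: "1 \<le> a \<Longrightarrow> t < s \<Longrightarrow> t \<noteq> -\<infinity> \<Longrightarrow> ereal (real (a + b)) * t < ereal (real a) * s + ereal (real b) * t"
  by (cases s; cases t) (auto simp: algebra_simps)

lemma E3: "1 \<le> a \<Longrightarrow> t < s \<Longrightarrow> ereal (real a) * t < ereal (real a) * s"
  by (cases s; cases t) auto

lemma FT_D:
  assumes "X \<in> FT n"
  shows "X \<in> carrier_mat n n" "\<exists>c::nat. \<forall>i<n. X $$ (i, i) = of_nat c"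
    "\<And>i j. j < i \<Longrightarrow> i < n \<Longrightarrow> X $$ (i, j) = 0"
  using assms unfolding FT_def by auto

lemma mult_entry:
  assumes "X \<in> carrier_mat n n" "Y \<in> carrier_mat n n" "i < n" "j < n"
  shows "(X * Y) $$ (i, j) = (\<Sum>k\<in>{0..<n}. X $$ (i, k) * Y $$ (k, j))"
  using assms by (auto simp: scalar_prod_def intro!: sum.cong)

lemma dmono: "a \<le> b \<Longrightarrow> ereal (real d) * a \<le> ereal (real d) * b"
  by (rule ereal_mult_left_mono) auto

lemma W_mult_gen:
  assumes d: "discrete_valuation v" and X: "X \<in> FT n" and Y: "Y \<in> FT n"
    and hi: "(\<forall>i<n. X $$ (i, i) = 0) \<or> (\<forall>i j. R i j \<longrightarrow> Q i j)"
    and hj: "(\<forall>i<n. Y $$ (i, i) = 0) \<or> (\<forall>i j. R i j \<longrightarrow> P i j)"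
    and hm: "\<forall>i k j. R i j \<and> i < k \<and> k < j \<and> j < n \<longrightarrow> P i k \<and> Q k j"
  shows "min (W v n P X) (W v n Q Y) \<le> W v n R (X * Y)"
proof -
  obtain cX :: nat where cX: "\<forall>i<n. X $$ (i, i) = of_nat cX" using FT_D(2)[OF X] by blast
  obtain cY :: nat where cY: "\<forall>i<n. Y $$ (i, i) = of_nat cY" using FT_D(2)[OF Y] by blast
  define s where "s = W v n P X"
  define t where "t = W v n Q Y"
  show ?thesis unfolding W_ge_iff s_def[symmetric] t_def[symmetric]
  proof (intro allI impI)
    fix i j assume ij: "i < j" "j < n" "R i j"
    let ?d = "ereal (real (j - i))"
    have "?d * min s t \<le> v (\<Sum>k\<in>{0..<n}. X $$ (i, k) * Y $$ (k, j))"
    proof (rule dv_sum[OF d], simp, intro ballI)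
      fix k assume "k \<in> {0..<n}"
      then have k: "k < n" by simp
      consider "k < i" | "k = i" | "i < k \<and> k < j" | "k = j" | "j < k" by linarith
      then show "?d * min s t \<le> v (X $$ (i, k) * Y $$ (k, j))"
      proof cases
        case 1 then show ?thesis using FT_D(3)[OF X, of k i] ij dv_zero[OF d] by simp
      next
        case 5 then show ?thesis using FT_D(3)[OF Y, of j k] k dv_zero[OF d] by simp
      next
        case 2
        show ?thesis
        proof (cases "\<forall>i<n. X $$ (i, i) = 0")
          case True then show ?thesis using 2 ij dv_zero[OF d] by simp
        next
          case False
          then have "Q i j" using hi ij by blast
          then have "?d * t \<le> v (Y $$ (i, j))" using W_entry[of i j n Q v Y] ij t_def by simp
          moreover have "?d * min s t \<le> ?d * t" by (rule dmono) simp
          moreover have "v (Y $$ (i, j)) \<le> v (X $$ (i, k) * Y $$ (k, j))"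
            using 2 cX ij dv_nat_mult[OF d] by simp
          ultimately show ?thesis by order
        qed
      next
        case 4
        show ?thesis
        proof (cases "\<forall>i<n. Y $$ (i, i) = 0")
          case True then show ?thesis using 4 ij dv_zero[OF d] by simp
        next
          case False
          then have "P i j" using hj ij by blast
          then have "?d * s \<le> v (X $$ (i, j))" using W_entry[of i j n P v X] ij s_def by simp
          moreover have "?d * min s t \<le> ?d * s" by (rule dmono) simp
          moreover have "v (X $$ (i, j)) \<le> v (X $$ (i, k) * Y $$ (k, j))"
            using 4 cY ij dv_nat_mult2[OF d] by simp
          ultimately show ?thesis by order
        qed
      next
        case 3
        then have PQ: "P i k" "Q k j" using hm ij by blast+
        have a: "ereal (real (k - i)) * s \<le> v (X $$ (i, k))" using W_entry[of i k n P v X] 3 ij PQ s_def by simp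
        have b: "ereal (real (j - k)) * t \<le> v (Y $$ (k, j))" using W_entry[of k j n Q v Y] 3 ij PQ t_def by simp
        have "?d * min s t \<le> ereal (real (k - i)) * s + ereal (real (j - k)) * t"
          using E1[of "k - i" "j - k" s t] 3 by simp
        also have "\<dots> \<le> v (X $$ (i, k)) + v (Y $$ (k, j))" using a b by (rule add_mono)
        also have "\<dots> = v (X $$ (i, k) * Y $$ (k, j))" using dv_mult[OF d] by simp
        finally show ?thesis .
      qed
    qed
    also have "(\<Sum>k\<in>{0..<n}. X $$ (i, k) * Y $$ (k, j)) = (X * Y) $$ (i, j)"
      using mult_entry[OF FT_D(1)[OF X] FT_D(1)[OF Y], of i j] ij by simp
    finally show "?d * min s t \<le> v ((X * Y) $$ (i, j))" .
  qed
qed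

lemma dv_sum_strict: assumes d: "discrete_valuation v" and w: "w \<noteq> \<infinity>"
  shows "finite S \<Longrightarrow> (\<forall>k\<in>S. w < v (f k)) \<Longrightarrow> w < v (sum f S)"
proof (induction S rule: finite_induct)
  case empty then show ?case using dv_zero[OF d] w by (simp add: less_le)
next
  case (insert x F)
  then have "w < min (v (f x)) (v (sum f F))" by auto
  also have "\<dots> \<le> v (f x + sum f F)" using dv_add[OF d] .
  finally show ?case using insert by simp
qed

lemma W_mult_strict:
  assumes d: "discrete_valuation v" and X: "X \<in> FT n" and Y: "Y \<in> FT n"
    and e: "\<forall>i<n. X $$ (i, i) = e" and ve: "v e = 0"
    and Psub: "\<forall>i k j. P i j \<and> i < k \<and> k < j \<and> j < n \<longrightarrow> P i k \<and> P k j"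
    and lt: "W v n P Y < W v n P X"
  shows "W v n P (X * Y) = W v n P Y \<and> W v n P (Y * X) = W v n P Y"
proof -
  define s where "s = W v n P X"
  define t where "t = W v n P Y"
  have st: "t < s" using lt s_def t_def by simp
  have triv: "(\<forall>i<n. X $$ (i, i) = 0) \<or> (\<forall>i j. P i j \<longrightarrow> P i j)"
    "(\<forall>i<n. Y $$ (i, i) = 0) \<or> (\<forall>i j. P i j \<longrightarrow> P i j)" by simp_all
  have mst: "min s t = t" using st by simp
  have ge1: "t \<le> W v n P (X * Y)"
    using W_mult_gen[OF d X Y triv(1) triv(2) Psub] mst s_def t_def by simp
  have ge2: "t \<le> W v n P (Y * X)"
    using W_mult_gen[OF d Y X triv(2) triv(1) Psub] mst s_def t_def by (simp add: min.commute)
  have tn: "t \<noteq> -\<infinity>" using W_ninf[OF d] t_def by simp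
  have "t \<noteq> \<infinity>" using st by auto
  then obtain r where r: "t = ereal r" using tn by (cases t) auto
  obtain i j where ij: "i < j" "j < n" "P i j" and att: "ereal (real (j - i)) * t = v (Y $$ (i, j))"
    using W_attain[of v n P Y] t_def \<open>t \<noteq> \<infinity>\<close> by auto
  let ?d = "ereal (real (j - i))"
  have dfin: "?d * t \<noteq> \<infinity>" using r by simp
  obtain cY :: nat where cY: "\<forall>i<n. Y $$ (i, i) = of_nat cY" using FT_D(2)[OF Y] by blast
  have XC: "X \<in> carrier_mat n n" and YC: "Y \<in> carrier_mat n n" using FT_D(1) X Y by auto
  have in_i: "i \<in> {0..<n}" and in_j: "j \<in> {0..<n}" using ij by auto
  have fin: "finite ({0..<n::nat} - {i})" "finite ({0..<n::nat} - {j})" by auto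
  have Xij: "?d * s \<le> v (X $$ (i, j))" using W_entry[of i j n P v X] ij s_def by simp
  have dst: "?d * t < ?d * s" using E3[of "j - i" t s] st ij by simp
  have "v ((X * Y) $$ (i, j)) = ?d * t"
  proof -
    let ?f = "\<lambda>k. X $$ (i, k) * Y $$ (k, j)"
    have "(X * Y) $$ (i, j) = ?f i + sum ?f ({0..<n} - {i})"
      using mult_entry[OF XC YC, of i j] ij sum.remove[OF _ in_i, of ?f] by simp
    moreover have "v (?f i) = ?d * t" using e ij att dv_mult[OF d] ve by simp
    moreover have "?d * t < v (sum ?f ({0..<n} - {i}))"
    proof (rule dv_sum_strict[OF d dfin fin(1)], intro ballI)
      fix k assume "k \<in> {0..<n} - {i}"
      then have k: "k < n" "k \<noteq> i" by auto
      consider "k < i" | "i < k \<and> k < j" | "k = j" | "j < k" using k by linarith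
      then show "?d * t < v (?f k)"
      proof cases
        case 1 then show ?thesis using FT_D(3)[OF X, of k i] ij dv_zero[OF d] dfin by (simp add: less_le)
      next
        case 4 then show ?thesis using FT_D(3)[OF Y, of j k] k dv_zero[OF d] dfin by (simp add: less_le)
      next
        case 3
        have "v (X $$ (i, j)) \<le> v (?f k)" using 3 cY ij dv_nat_mult2[OF d] by simp
        then show ?thesis using Xij dst by order
      next
        case 2
        then have PQ: "P i k" "P k j" using Psub ij by blast+
        have a: "ereal (real (k - i)) * s \<le> v (X $$ (i, k))" using W_entry[of i k n P v X] 2 ij PQ s_def by simp
        have b: "ereal (real (j - k)) * t \<le> v (Y $$ (k, j))" using W_entry[of k j n P v Y] 2 ij PQ t_def by simp
        have "?d * t < ereal (real (k - i)) * s + ereal (real (j - k)) * t"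
        proof -
          have h1: "1 \<le> k - i" and h2: "k - i + (j - k) = j - i" using 2 by auto
          show ?thesis using E2[OF h1 st tn, of "j - k"] unfolding h2 .
        qed
        also have "\<dots> \<le> v (X $$ (i, k)) + v (Y $$ (k, j))" using a b by (rule add_mono)
        also have "\<dots> = v (?f k)" using dv_mult[OF d] by simp
        finally show ?thesis .
      qed
    qed
    ultimately show ?thesis using dv_strict[OF d] by simp
  qed
  then have le1: "W v n P (X * Y) \<le> t" using W_le[of i j n P v "X * Y" t] ij by simp
  have "v ((Y * X) $$ (i, j)) = ?d * t"
  proof -
    let ?f = "\<lambda>k. Y $$ (i, k) * X $$ (k, j)"
    have "(Y * X) $$ (i, j) = ?f j + sum ?f ({0..<n} - {j})"
      using mult_entry[OF YC XC, of i j] ij sum.remove[OF _ in_j, of ?f] by simp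
    moreover have "v (?f j) = ?d * t" using e ij att dv_mult[OF d] ve by simp
    moreover have "?d * t < v (sum ?f ({0..<n} - {j}))"
    proof (rule dv_sum_strict[OF d dfin fin(2)], intro ballI)
      fix k assume "k \<in> {0..<n} - {j}"
      then have k: "k < n" "k \<noteq> j" by auto
      consider "k < i" | "i < k \<and> k < j" | "k = i" | "j < k" using k by linarith
      then show "?d * t < v (?f k)"
      proof cases
        case 1 then show ?thesis using FT_D(3)[OF Y, of k i] ij dv_zero[OF d] dfin by (simp add: less_le)
      next
        case 4 then show ?thesis using FT_D(3)[OF X, of j k] k dv_zero[OF d] dfin by (simp add: less_le)
      next
        case 3
        have "v (X $$ (i, j)) \<le> v (?f k)" using 3 cY ij dv_nat_mult[OF d] by simp
        then show ?thesis using Xij dst by order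
      next
        case 2
        then have PQ: "P i k" "P k j" using Psub ij by blast+
        have a: "ereal (real (k - i)) * t \<le> v (Y $$ (i, k))" using W_entry[of i k n P v Y] 2 ij PQ t_def by simp
        have b: "ereal (real (j - k)) * s \<le> v (X $$ (k, j))" using W_entry[of k j n P v X] 2 ij PQ s_def by simp
        have "?d * t < ereal (real (j - k)) * s + ereal (real (k - i)) * t"
        proof -
          have h1: "1 \<le> j - k" and h2: "j - k + (k - i) = j - i" using 2 by auto
          show ?thesis using E2[OF h1 st tn, of "k - i"] unfolding h2 .
        qed
        also have "\<dots> = ereal (real (k - i)) * t + ereal (real (j - k)) * s" by (simp add: add.commute)
        also have "\<dots> \<le> v (Y $$ (i, k)) + v (X $$ (k, j))" using a b by (rule add_mono)
        also have "\<dots> = v (?f k)" using dv_mult[OF d] by simp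
        finally show ?thesis .
      qed
    qed
    ultimately show ?thesis using dv_strict[OF d] by simp
  qed
  then have le2: "W v n P (Y * X) \<le> t" using W_le[of i j n P v "Y * X" t] ij by simp
  show ?thesis using ge1 ge2 le1 le2 t_def by simp
qed

lemma sum_single: "finite S \<Longrightarrow> j \<in> S \<Longrightarrow> (\<forall>k\<in>S - {j}. f k = 0) \<Longrightarrow> sum f S = f j"
  by (simp add: sum.remove)

lemma dv_inverse: "discrete_valuation v \<Longrightarrow> v e = 0 \<Longrightarrow> v (inverse e) = 0"
proof -
  assume d: "discrete_valuation v" and ve: "v e = 0"
  have "e \<noteq> 0" using ve dv_zero[OF d] by auto
  then have "v (e * inverse e) = 0" using dv_one[OF d] by simp
  then show ?thesis using dv_mult[OF d, of e "inverse e"] ve by simp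
qed

lemma inv_UT:
  fixes X B :: "'a::field mat"
  assumes XC: "X \<in> carrier_mat n n" and BC: "B \<in> carrier_mat n n"
    and UT: "\<forall>i j. j < i \<and> i < n \<longrightarrow> X $$ (i, j) = 0"
    and e: "\<forall>i<n. X $$ (i, i) = e" and enz: "e \<noteq> 0"
    and BX: "B * X = 1\<^sub>m n"
  shows "\<forall>i j. j < i \<and> i < n \<longrightarrow> B $$ (i, j) = 0" and "\<forall>i<n. B $$ (i, i) = inverse e"
proof -
  have L: "\<forall>i. j < i \<and> i < n \<longrightarrow> B $$ (i, j) = 0" for j
  proof (induction j rule: less_induct)
    case (less j)
    show ?case
    proof (intro allI impI)
      fix i assume ji: "j < i \<and> i < n"
      have "0 = (B * X) $$ (i, j)" using BX ji by simp
      also have "\<dots> = (\<Sum>k\<in>{0..<n}. B $$ (i, k) * X $$ (k, j))" using mult_entry[OF BC XC, of i j] ji by simp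
      also have "\<dots> = B $$ (i, j) * X $$ (j, j)"
      proof (rule sum_single, simp, use ji in simp, intro ballI)
        fix k assume "k \<in> {0..<n} - {j}"
        then have k: "k < n" "k \<noteq> j" by auto
        show "B $$ (i, k) * X $$ (k, j) = 0"
        proof (cases "k < j")
          case True then show ?thesis using less.IH[of k] ji by simp
        next
          case False then show ?thesis using UT k by simp
        qed
      qed
      finally have "B $$ (i, j) * X $$ (j, j) = 0" by simp
      moreover have "X $$ (j, j) = e" using e ji by simp
      ultimately show "B $$ (i, j) = 0" using enz by simp
    qed
  qed
  then show L2: "\<forall>i j. j < i \<and> i < n \<longrightarrow> B $$ (i, j) = 0" by blast
  show "\<forall>i<n. B $$ (i, i) = inverse e"
  proof (intro allI impI)
    fix i assume i: "i < n"
    have "1 = (B * X) $$ (i, i)" using BX i by simp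
    also have "\<dots> = (\<Sum>k\<in>{0..<n}. B $$ (i, k) * X $$ (k, i))" using mult_entry[OF BC XC, of i i] i by simp
    also have "\<dots> = B $$ (i, i) * X $$ (i, i)"
    proof (rule sum_single, simp, use i in simp, intro ballI)
      fix k assume "k \<in> {0..<n} - {i}"
      then have k: "k < n" "k \<noteq> i" by auto
      show "B $$ (i, k) * X $$ (k, i) = 0"
      proof (cases "k < i")
        case True then show ?thesis using L2 i by simp
      next
        case False then show ?thesis using UT k i by simp
      qed
    qed
    finally show "B $$ (i, i) = inverse e" using e i enz by (simp add: field_simps)
  qed
qed

lemma inv_bound:
  assumes d: "discrete_valuation v" and XC: "X \<in> carrier_mat n n" and BC: "B \<in> carrier_mat n n"
    and UTX: "\<forall>i j. j < i \<and> i < n \<longrightarrow> X $$ (i, j) = 0"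
    and UTB: "\<forall>i j. j < i \<and> i < n \<longrightarrow> B $$ (i, j) = 0"
    and e: "\<forall>i<n. X $$ (i, i) = e" and ve: "v e = 0"
    and Bd: "\<forall>i<n. B $$ (i, i) = inverse e"
    and XB: "X * B = 1\<^sub>m n"
    and hX: "\<forall>i j. i < j \<and> j < n \<and> P i j \<longrightarrow> ereal (real (j - i)) * s \<le> v (X $$ (i, j))"
    and Psub: "\<forall>i k j. P i j \<and> i < k \<and> k < j \<and> j < n \<longrightarrow> P i k \<and> P k j"
  shows "\<forall>i j. i < j \<and> j < n \<and> P i j \<longrightarrow> ereal (real (j - i)) * s \<le> v (B $$ (i, j))"
proof -
  have enz: "e \<noteq> 0" using ve dv_zero[OF d] by auto
  have vie: "v (inverse e) = 0" using dv_inverse[OF d ve] .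
  have L: "\<forall>i j. j - i = m \<and> i < j \<and> j < n \<and> P i j \<longrightarrow> ereal (real (j - i)) * s \<le> v (B $$ (i, j))" for m
  proof (induction m rule: less_induct)
    case (less m)
    show ?case
    proof (intro allI impI)
      fix i j assume ij: "j - i = m \<and> i < j \<and> j < n \<and> P i j"
      let ?d = "ereal (real (j - i))"
      let ?f = "\<lambda>k. X $$ (i, k) * B $$ (k, j)"
      have in_i: "i \<in> {0..<n}" using ij by auto
      have "0 = (X * B) $$ (i, j)" using XB ij by simp
      also have "\<dots> = ?f i + sum ?f ({0..<n} - {i})"
        using mult_entry[OF XC BC, of i j] ij sum.remove[OF _ in_i, of ?f] by simp
      finally have eq: "e * B $$ (i, j) = - sum ?f ({0..<n} - {i})"
        using e ij by (simp add: eq_neg_iff_add_eq_0 add.commute)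
      have "?d * s \<le> v (sum ?f ({0..<n} - {i}))"
      proof (rule dv_sum[OF d], simp, intro ballI)
        fix k assume "k \<in> {0..<n} - {i}"
        then have k: "k < n" "k \<noteq> i" by auto
        consider "k < i" | "i < k \<and> k < j" | "k = j" | "j < k" using k by linarith
        then show "?d * s \<le> v (?f k)"
        proof cases
          case 1 then show ?thesis using UTX ij dv_zero[OF d] by simp
        next
          case 4 then show ?thesis using UTB k dv_zero[OF d] by simp
        next
          case 3
          have "?d * s \<le> v (X $$ (i, j))" using hX ij by blast
          moreover have "v (?f k) = v (X $$ (i, j))" using 3 ij Bd dv_mult[OF d] vie by simp
          ultimately show ?thesis by simp
        next
          case 2
          then have PQ: "P i k" "P k j" using Psub ij by blast+
          have a: "ereal (real (k - i)) * s \<le> v (X $$ (i, k))" using hX 2 ij PQ by simp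
          have b: "ereal (real (j - k)) * s \<le> v (B $$ (k, j))" using less.IH[of "j - k"] 2 ij PQ by auto
          have "?d * s = ereal (real (k - i + (j - k))) * min s s" using 2 by simp
          also have "\<dots> \<le> ereal (real (k - i)) * s + ereal (real (j - k)) * s" by (rule E1)
          also have "\<dots> \<le> v (X $$ (i, k)) + v (B $$ (k, j))" using a b by (rule add_mono)
          also have "\<dots> = v (?f k)" using dv_mult[OF d] by simp
          finally show ?thesis .
        qed
      qed
      also have "v (sum ?f ({0..<n} - {i})) = v (e * B $$ (i, j))" using eq dv_uminus[OF d] by simp
      also have "\<dots> = v (B $$ (i, j))" using dv_mult[OF d] ve by simp
      finally show "?d * s \<le> v (B $$ (i, j))" .
    qed
  qed
  then show ?thesis by blast
qed

lemma UT_mult: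
  fixes A B :: "'a::field mat"
  assumes AC: "A \<in> carrier_mat n n" and BC: "B \<in> carrier_mat n n"
    and UA: "\<forall>i j. j < i \<and> i < n \<longrightarrow> A $$ (i, j) = 0"
    and UB: "\<forall>i j. j < i \<and> i < n \<longrightarrow> B $$ (i, j) = 0"
  shows "\<forall>i j. j < i \<and> i < n \<longrightarrow> (A * B) $$ (i, j) = 0"
    "\<forall>i<n. (A * B) $$ (i, i) = A $$ (i, i) * B $$ (i, i)"
proof -
  show "\<forall>i j. j < i \<and> i < n \<longrightarrow> (A * B) $$ (i, j) = 0"
  proof (intro allI impI)
    fix i j assume ij: "j < i \<and> i < n"
    have "(A * B) $$ (i, j) = (\<Sum>k\<in>{0..<n}. A $$ (i, k) * B $$ (k, j))" using mult_entry[OF AC BC, of i j] ij by simp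
    also have "\<dots> = 0"
    proof (rule sum.neutral, intro ballI)
      fix k assume "k \<in> {0..<n}"
      then show "A $$ (i, k) * B $$ (k, j) = 0" using UA UB ij by (cases "k < i") auto
    qed
    finally show "(A * B) $$ (i, j) = 0" .
  qed
  show "\<forall>i<n. (A * B) $$ (i, i) = A $$ (i, i) * B $$ (i, i)"
  proof (intro allI impI)
    fix i assume i: "i < n"
    have "(A * B) $$ (i, i) = (\<Sum>k\<in>{0..<n}. A $$ (i, k) * B $$ (k, i))" using mult_entry[OF AC BC, of i i] i by simp
    also have "\<dots> = A $$ (i, i) * B $$ (i, i)"
    proof (rule sum_single, simp, use i in simp, intro ballI)
      fix k assume "k \<in> {0..<n} - {i}"
      then show "A $$ (i, k) * B $$ (k, i) = 0" using UA UB i by (cases "k < i") auto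
    qed
    finally show "(A * B) $$ (i, i) = A $$ (i, i) * B $$ (i, i)" .
  qed
qed

lemma pow_diag:
  fixes X :: "'a::field mat"
  assumes XC: "X \<in> carrier_mat n n" and UX: "\<forall>i j. j < i \<and> i < n \<longrightarrow> X $$ (i, j) = 0"
    and e: "\<forall>i<n. X $$ (i, i) = e"
  shows "X ^\<^sub>m k \<in> carrier_mat n n \<and> (\<forall>i j. j < i \<and> i < n \<longrightarrow> (X ^\<^sub>m k) $$ (i, j) = 0) \<and> (\<forall>i<n. (X ^\<^sub>m k) $$ (i, i) = e ^ k)"
proof (induction k)
  case 0 then show ?case using XC by auto
next
  case (Suc k)
  then have C: "X ^\<^sub>m k \<in> carrier_mat n n" and U: "\<forall>i j. j < i \<and> i < n \<longrightarrow> (X ^\<^sub>m k) $$ (i, j) = 0"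
    and D: "\<forall>i<n. (X ^\<^sub>m k) $$ (i, i) = e ^ k" by auto
  show ?case using UT_mult[OF C XC U UX] D e C XC by auto
qed

lemma nil_diag0:
  fixes X :: "'a::field mat"
  assumes X: "X \<in> FT n" and n: "n \<ge> 1" and nil: "nilpotent_mat X"
  shows "\<forall>i<n. X $$ (i, i) = 0"
proof -
  obtain c :: nat where c: "\<forall>i<n. X $$ (i, i) = of_nat c" using FT_D(2)[OF X] by blast
  obtain k where k: "X ^\<^sub>m k = 0\<^sub>m (dim_row X) (dim_col X)" using nil unfolding nilpotent_mat_def by blast
  have XC: "X \<in> carrier_mat n n" using FT_D(1)[OF X] .
  have U: "\<forall>i j. j < i \<and> i < n \<longrightarrow> X $$ (i, j) = 0" using FT_D(3)[OF X] by blast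
  have "(X ^\<^sub>m k) $$ (0, 0) = of_nat c ^ k" using pow_diag[OF XC U c] n by auto
  moreover have "(X ^\<^sub>m k) $$ (0, 0) = 0" using k XC n by auto
  ultimately have "(of_nat c :: 'a) = 0" by simp
  then show ?thesis using c by simp
qed

lemma inv_ex:
  fixes X :: "'a::field mat"
  assumes X: "X \<in> FT n" and n: "n \<ge> 1" and inv: "invertible_mat X"
  shows "\<exists>B \<in> carrier_mat n n. X * B = 1\<^sub>m n \<and> B * X = 1\<^sub>m n"
proof -
  have XC: "X \<in> carrier_mat n n" using FT_D(1)[OF X] .
  obtain B where B: "inverts_mat X B" "inverts_mat B X" using inv unfolding invertible_mat_def by blast
  have 1: "X * B = 1\<^sub>m n" using B(1) XC unfolding inverts_mat_def by simp
  then have "dim_col B = n" by (metis index_mult_mat(3) index_one_mat(3))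
  moreover have "B * X = 1\<^sub>m (dim_row B)" using B(2) unfolding inverts_mat_def by simp
  then have "dim_row B = n" using XC by (metis index_mult_mat(3) index_one_mat(3) carrier_matD(2))
  ultimately show ?thesis using 1 \<open>B * X = 1\<^sub>m (dim_row B)\<close> by auto
qed

lemma inv_diag_nz:
  fixes X :: "'a::field mat"
  assumes X: "X \<in> FT n" and n: "n \<ge> 1" and inv: "invertible_mat X"
  shows "\<exists>c::nat. (\<forall>i<n. X $$ (i, i) = of_nat c) \<and> (of_nat c :: 'a) \<noteq> 0"
proof -
  obtain c :: nat where c: "\<forall>i<n. X $$ (i, i) = of_nat c" using FT_D(2)[OF X] by blast
  obtain B where BC: "B \<in> carrier_mat n n" and BX: "B * X = 1\<^sub>m n" using inv_ex[OF X n inv] by blast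
  have XC: "X \<in> carrier_mat n n" using FT_D(1)[OF X] .
  have "(of_nat c :: 'a) \<noteq> 0"
  proof
    assume c0: "(of_nat c :: 'a) = 0"
    have "1 = (B * X) $$ (0, 0)" using BX n by simp
    also have "\<dots> = (\<Sum>k\<in>{0..<n}. B $$ (0, k) * X $$ (k, 0))" using mult_entry[OF BC XC, of 0 0] n by simp
    also have "\<dots> = 0"
    proof (rule sum.neutral, intro ballI)
      fix k assume "k \<in> {0..<n}"
      then show "B $$ (0, k) * X $$ (k, 0) = 0" using c c0 FT_D(3)[OF X, of 0 k] by (cases "k = 0") auto
    qed
    finally show False by simp
  qed
  then show ?thesis using c by blast
qed

lemma W_frob:
  assumes d: "discrete_valuation v" and XC: "X \<in> carrier_mat n n" and p: "p > 0"
  shows "W v n P (frob_mat p X) = ereal (real p) * W v n P X"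
proof (rule antisym)
  show "ereal (real p) * W v n P X \<le> W v n P (frob_mat p X)"
    unfolding W_ge_iff
  proof (intro allI impI)
    fix i j assume ij: "i < j" "j < n" "P i j"
    have "ereal (real (j - i)) * (ereal (real p) * W v n P X) = ereal (real p) * (ereal (real (j - i)) * W v n P X)"
      by (simp add: mult.left_commute)
    also have "\<dots> \<le> ereal (real p) * v (X $$ (i, j))"
      by (rule ereal_mult_left_mono) (use W_entry[of i j n P v X] ij in auto)
    also have "\<dots> = v (frob_mat p X $$ (i, j))" using ij XC dv_pow[OF d] by (simp add: frob_mat_def)
    finally show "ereal (real (j - i)) * (ereal (real p) * W v n P X) \<le> v (frob_mat p X $$ (i, j))" .
  qed
  show "W v n P (frob_mat p X) \<le> ereal (real p) * W v n P X"
  proof (cases "W v n P X = \<infinity>")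
    case True then show ?thesis using p by simp
  next
    case False
    then obtain i j where ij: "i < j" "j < n" "P i j" and att: "ereal (real (j - i)) * W v n P X = v (X $$ (i, j))"
      using W_attain[of v n P X] by blast
    have "v (frob_mat p X $$ (i, j)) = ereal (real p) * v (X $$ (i, j))" using ij XC dv_pow[OF d] by (simp add: frob_mat_def)
    also have "\<dots> = ereal (real (j - i)) * (ereal (real p) * W v n P X)" using att by (simp add: mult.left_commute)
    finally show ?thesis using W_le[of i j n P v "frob_mat p X"] ij by simp
  qed
qed

lemma R1: "(1::real) \<le> d \<Longrightarrow> d \<le> N \<Longrightarrow> d * min (c / N) c \<le> c"
proof (cases "c \<ge> 0")
  case True
  assume a: "1 \<le> d" "d \<le> N"
  have "d * min (c / N) c \<le> d * (c / N)" using a by (intro mult_left_mono) auto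
  also have "\<dots> \<le> c" using a True mult_right_mono[of d N c] by (simp add: field_simps mult.commute)
  finally show ?thesis .
next
  case False
  assume a: "1 \<le> d" "d \<le> N"
  have "d * min (c / N) c \<le> d * c" using a by (intro mult_left_mono) auto
  also have "\<dots> \<le> c" using a False by (simp add: mult_le_cancel_right1)
  finally show ?thesis .
qed

lemma W_smult:
  assumes d: "discrete_valuation v" and XC: "X \<in> carrier_mat n n" and g: "v \<gamma> = ereal c"
    and hb: "\<forall>i j. i < j \<and> j < n \<and> P i j \<longrightarrow> real (j - i) * m \<le> c"
  shows "ereal m + W v n P X \<le> W v n P (\<gamma> \<cdot>\<^sub>m X)"
  unfolding W_ge_iff
proof (intro allI impI)
  fix i j assume ij: "i < j" "j < n" "P i j"
  have wn: "W v n P X \<noteq> -\<infinity>" using W_ninf[OF d] .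
  have "ereal (real (j - i)) * (ereal m + W v n P X) = ereal (real (j - i) * m) + ereal (real (j - i)) * W v n P X"
    using wn by (cases "W v n P X") (auto simp: algebra_simps)
  also have "\<dots> \<le> ereal c + v (X $$ (i, j))"
    using hb ij W_entry[of i j n P v X] by (intro add_mono) auto
  also have "\<dots> = v ((\<gamma> \<cdot>\<^sub>m X) $$ (i, j))" using ij XC g dv_mult[OF d] by simp
  finally show "ereal (real (j - i)) * (ereal m + W v n P X) \<le> v ((\<gamma> \<cdot>\<^sub>m X) $$ (i, j))" .
qed

lemma W_lin:
  assumes d: "discrete_valuation v" and XC: "X \<in> carrier_mat n n" and YC: "Y \<in> carrier_mat n n"
  shows "min (W v n P X) (W v n P Y) \<le> W v n P (of_nat a \<cdot>\<^sub>m X + of_nat b \<cdot>\<^sub>m Y)"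
  unfolding W_ge_iff
proof (intro allI impI)
  fix i j assume ij: "i < j" "j < n" "P i j"
  let ?d = "ereal (real (j - i))"
  have "?d * min (W v n P X) (W v n P Y) \<le> ?d * W v n P X" by (rule dmono) simp
  also have "\<dots> \<le> v (X $$ (i, j))" using W_entry[of i j n P v X] ij by simp
  also have "\<dots> \<le> v (of_nat a * X $$ (i, j))" using dv_nat_mult[OF d] .
  finally have 1: "?d * min (W v n P X) (W v n P Y) \<le> v (of_nat a * X $$ (i, j))" .
  have "?d * min (W v n P X) (W v n P Y) \<le> ?d * W v n P Y" by (rule dmono) simp
  also have "\<dots> \<le> v (Y $$ (i, j))" using W_entry[of i j n P v Y] ij by simp
  also have "\<dots> \<le> v (of_nat b * Y $$ (i, j))" using dv_nat_mult[OF d] .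
  finally have 2: "?d * min (W v n P X) (W v n P Y) \<le> v (of_nat b * Y $$ (i, j))" .
  have "?d * min (W v n P X) (W v n P Y) \<le> min (v (of_nat a * X $$ (i, j))) (v (of_nat b * Y $$ (i, j)))"
    using 1 2 by simp
  also have "\<dots> \<le> v (of_nat a * X $$ (i, j) + of_nat b * Y $$ (i, j))" using dv_add[OF d] .
  also have "\<dots> = v ((of_nat a \<cdot>\<^sub>m X + of_nat b \<cdot>\<^sub>m Y) $$ (i, j))" using ij XC YC by simp
  finally show "?d * min (W v n P X) (W v n P Y) \<le> v ((of_nat a \<cdot>\<^sub>m X + of_nat b \<cdot>\<^sub>m Y) $$ (i, j))" .
qed

lemma W_addI:
  assumes XC: "X \<in> carrier_mat n n"
  shows "W v n P (X + of_int k \<cdot>\<^sub>m 1\<^sub>m n) = W v n P X"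
  unfolding W_def
  by (rule INF_cong) (use XC in auto)

lemma W_inf_iff:
  assumes d: "discrete_valuation v"
  shows "W v n P X = \<infinity> \<longleftrightarrow> (\<forall>i j. i < j \<and> j < n \<and> P i j \<longrightarrow> X $$ (i, j) = 0)"
proof -
  have "W v n P X = \<infinity> \<longleftrightarrow> \<infinity> \<le> W v n P X" by auto
  also have "\<dots> \<longleftrightarrow> (\<forall>i j. i < j \<longrightarrow> j < n \<longrightarrow> P i j \<longrightarrow> ereal (real (j - i)) * \<infinity> \<le> v (X $$ (i, j)))"
    by (rule W_ge_iff)
  also have "\<dots> \<longleftrightarrow> (\<forall>i j. i < j \<and> j < n \<and> P i j \<longrightarrow> X $$ (i, j) = 0)"
    using dv_inf[OF d] by auto
  finally show ?thesis .
qed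

lemma W_inv:
  assumes d: "discrete_valuation v" and X: "X \<in> FT n" and BC: "B \<in> carrier_mat n n"
    and XB: "X * B = 1\<^sub>m n" and BX: "B * X = 1\<^sub>m n"
    and e: "\<forall>i<n. X $$ (i, i) = e" and ve: "v e = 0"
    and Psub: "\<forall>i k j. P i j \<and> i < k \<and> k < j \<and> j < n \<longrightarrow> P i k \<and> P k j"
  shows "W v n P B = W v n P X"
proof -
  have XC: "X \<in> carrier_mat n n" using FT_D(1)[OF X] .
  have UX: "\<forall>i j. j < i \<and> i < n \<longrightarrow> X $$ (i, j) = 0" using FT_D(3)[OF X] by blast
  have enz: "e \<noteq> 0" using ve dv_zero[OF d] by auto
  note I = inv_UT[OF XC BC UX e enz BX]
  have hX: "\<forall>i j. i < j \<and> j < n \<and> P i j \<longrightarrow> ereal (real (j - i)) * W v n P X \<le> v (X $$ (i, j))"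
    using W_entry[of _ _ n P v X] by blast
  have hB: "\<forall>i j. i < j \<and> j < n \<and> P i j \<longrightarrow> ereal (real (j - i)) * W v n P B \<le> v (B $$ (i, j))"
    using W_entry[of _ _ n P v B] by blast
  have 1: "\<forall>i j. i < j \<and> j < n \<and> P i j \<longrightarrow> ereal (real (j - i)) * W v n P X \<le> v (B $$ (i, j))"
    by (rule inv_bound[OF d XC BC UX I(1) e ve I(2) XB hX Psub])
  have e2: "\<forall>i<n. X $$ (i, i) = inverse (inverse e)" using e by simp
  have 2: "\<forall>i j. i < j \<and> j < n \<and> P i j \<longrightarrow> ereal (real (j - i)) * W v n P B \<le> v (X $$ (i, j))"
    by (rule inv_bound[OF d BC XC I(1) UX I(2) dv_inverse[OF d ve] e2 BX hB Psub])
  have "W v n P X \<le> W v n P B" unfolding W_ge_iff using 1 by blast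
  moreover have "W v n P B \<le> W v n P X" unfolding W_ge_iff using 2 by blast
  ultimately show ?thesis by (rule antisym[rotated])
qed

theorem lemma3:
  fixes v :: "'a::field \<Rightarrow> ereal" and p n :: nat and X Y :: "'a mat"
  assumes p: "prime p" and char: "CHAR('a) = p"
    and dv: "discrete_valuation v"
    and n: "n \<ge> 2"
    and X: "X \<in> FT n" and Y: "Y \<in> FT n"
  shows
    \<comment> \<open>(i)\<close>
    "(vM v n X = \<infinity> \<longleftrightarrow> is_diagonal_mat X)
   \<and> \<comment> \<open>(ii)\<close>
     vMt v n X \<ge> vM v n X
   \<and> \<comment> \<open>(iii)\<close>
     (\<forall>a b :: nat.
        vM v n (of_nat a \<cdot>\<^sub>m X + of_nat b \<cdot>\<^sub>m Y) \<ge> min (vM v n X) (vM v n Y)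
      \<and> vMt v n (of_nat a \<cdot>\<^sub>m X + of_nat b \<cdot>\<^sub>m Y) \<ge> min (vMt v n X) (vMt v n Y))
   \<and> (\<forall>k :: int. vM v n (X + of_int k \<cdot>\<^sub>m 1\<^sub>m n) = vM v n X
               \<and> vMt v n (X + of_int k \<cdot>\<^sub>m 1\<^sub>m n) = vMt v n X)
   \<and> \<comment> \<open>(iv)\<close>
     vM v n (frob_mat p X) = ereal (real p) * vM v n X
   \<and> vMt v n (frob_mat p X) = ereal (real p) * vMt v n X
   \<and> \<comment> \<open>(v)\<close>
     vM v n (X * Y) \<ge> min (vM v n X) (vM v n Y)
   \<and> vMt v n (X * Y) \<ge> min (vMt v n X) (vMt v n Y)
   \<and> \<comment> \<open>(vi)\<close>
     (nilpotent_mat X \<longrightarrow>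
        vM v n (X * Y) \<ge> min (vM v n X) (vMt v n Y)
      \<and> vM v n (Y * X) \<ge> min (vM v n X) (vMt v n Y))
   \<and> \<comment> \<open>(vii)\<close>
     (nilpotent_mat X \<and> nilpotent_mat Y \<longrightarrow>
        vM v n (X * Y) \<ge> min (vMt v n X) (vMt v n Y))
   \<and> \<comment> \<open>(viii)\<close>
     (invertible_mat X \<and> vM v n X > vM v n Y \<longrightarrow>
        vM v n (X * Y) = vM v n Y \<and> vM v n (Y * X) = vM v n Y)
   \<and> \<comment> \<open>(ix)\<close>
     (invertible_mat X \<and> vMt v n X > vMt v n Y \<longrightarrow>
        vMt v n (X * Y) = vMt v n Y \<and> vMt v n (Y * X) = vMt v n Y)
   \<and> \<comment> \<open>(x)\<close>
     (\<forall>B \<in> carrier_mat n n. X * B = 1\<^sub>m n \<and> B * X = 1\<^sub>m n \<longrightarrow>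
        vM v n B = vM v n X \<and> vMt v n B = vMt v n X)
   \<and> \<comment> \<open>(xi)\<close>
     (\<forall>(c::int) (\<gamma>::'a). nilpotent_mat X \<and> v \<gamma> = ereal (of_int c) \<longrightarrow>
        vM v n (\<gamma> \<cdot>\<^sub>m X)
          \<ge> ereal (min (of_int c / real (n - 1)) (of_int c)) + vM v n X
      \<and> (n \<ge> 3 \<longrightarrow> vMt v n (\<gamma> \<cdot>\<^sub>m X)
          \<ge> ereal (min (of_int c / real (n - 2)) (of_int c)) + vMt v n X))"
proof -
  define T where "T = (\<lambda>(i::nat) (j::nat). True)"
  define N where "N = (\<lambda>(i::nat) (j::nat). (i, j) \<noteq> (0, n - 1))"
  have vMT: "\<And>Z. vM v n Z = W v n T Z" unfolding T_def by (rule vM_W)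
  have vMN: "\<And>Z. vMt v n Z = W v n N Z" unfolding N_def by (rule vMt_W)
  have XC: "X \<in> carrier_mat n n" and YC: "Y \<in> carrier_mat n n" using FT_D(1) X Y by auto
  have n1: "n \<ge> 1" using n by simp
  have ST: "\<forall>i k j. T i j \<and> i < k \<and> k < j \<and> j < n \<longrightarrow> T i k \<and> T k j" unfolding T_def by simp
  have SN: "\<forall>i k j. N i j \<and> i < k \<and> k < j \<and> j < n \<longrightarrow> N i k \<and> N k j" unfolding N_def by auto
  have trT: "\<And>Z. (\<forall>i<n. Z $$ (i, i) = 0) \<or> (\<forall>i j. T i j \<longrightarrow> T i j)" by simp
  have trN: "\<And>Z. (\<forall>i<n. Z $$ (i, i) = 0) \<or> (\<forall>i j. N i j \<longrightarrow> N i j)" by simp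
  have trNT: "\<And>Z. (\<forall>i<n. Z $$ (i, i) = 0) \<or> (\<forall>i j. T i j \<longrightarrow> T i j)" by simp
  have P1: "vM v n X = \<infinity> \<longleftrightarrow> is_diagonal_mat X"
  proof -
    have "vM v n X = \<infinity> \<longleftrightarrow> (\<forall>i j. i < j \<and> j < n \<longrightarrow> X $$ (i, j) = 0)"
      unfolding vMT W_inf_iff[OF dv] T_def by simp
    also have "\<dots> \<longleftrightarrow> is_diagonal_mat X"
      unfolding is_diagonal_mat_def using XC FT_D(3)[OF X]
      by (auto, metis linorder_neqE_nat)
    finally show ?thesis .
  qed
  have P2: "vMt v n X \<ge> vM v n X"
    unfolding vMT vMN W_ge_iff using W_entry[of _ _ n T v X] unfolding T_def by blast
  have P3: "\<forall>a b :: nat.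
        vM v n (of_nat a \<cdot>\<^sub>m X + of_nat b \<cdot>\<^sub>m Y) \<ge> min (vM v n X) (vM v n Y)
      \<and> vMt v n (of_nat a \<cdot>\<^sub>m X + of_nat b \<cdot>\<^sub>m Y) \<ge> min (vMt v n X) (vMt v n Y)"
    unfolding vMT vMN using W_lin[OF dv XC YC] by blast
  have P3b: "\<forall>k :: int. vM v n (X + of_int k \<cdot>\<^sub>m 1\<^sub>m n) = vM v n X
               \<and> vMt v n (X + of_int k \<cdot>\<^sub>m 1\<^sub>m n) = vMt v n X"
    unfolding vMT vMN using W_addI[OF XC] by blast
  have pp: "p > 0" using prime_gt_0_nat[OF p] .
  have P4: "vM v n (frob_mat p X) = ereal (real p) * vM v n X"
    "vMt v n (frob_mat p X) = ereal (real p) * vMt v n X"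
    unfolding vMT vMN using W_frob[OF dv XC pp] by blast+
  have P5: "vM v n (X * Y) \<ge> min (vM v n X) (vM v n Y)" "vMt v n (X * Y) \<ge> min (vMt v n X) (vMt v n Y)"
    unfolding vMT vMN
    using W_mult_gen[OF dv X Y trT trT ST] W_mult_gen[OF dv X Y trN trN SN] by auto
  have P6: "nilpotent_mat X \<longrightarrow>
        vM v n (X * Y) \<ge> min (vM v n X) (vMt v n Y)
      \<and> vM v n (Y * X) \<ge> min (vM v n X) (vMt v n Y)"
  proof
    assume nX: "nilpotent_mat X"
    have z: "(\<forall>i<n. X $$ (i, i) = 0)" using nil_diag0[OF X n1 nX] .
    have h1: "(\<forall>i<n. X $$ (i, i) = 0) \<or> (\<forall>i j. T i j \<longrightarrow> N i j)" using z by simp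
    have h2: "(\<forall>i<n. Y $$ (i, i) = 0) \<or> (\<forall>i j. T i j \<longrightarrow> T i j)" by simp
    have h3: "\<forall>i k j. T i j \<and> i < k \<and> k < j \<and> j < n \<longrightarrow> T i k \<and> N k j" unfolding T_def N_def by auto
    have g1: "min (W v n T X) (W v n N Y) \<le> W v n T (X * Y)" by (rule W_mult_gen[OF dv X Y h1 h2 h3])
    have h1': "(\<forall>i<n. Y $$ (i, i) = 0) \<or> (\<forall>i j. T i j \<longrightarrow> T i j)" by simp
    have h2': "(\<forall>i<n. X $$ (i, i) = 0) \<or> (\<forall>i j. T i j \<longrightarrow> N i j)" using z by simp
    have h3': "\<forall>i k j. T i j \<and> i < k \<and> k < j \<and> j < n \<longrightarrow> N i k \<and> T k j" unfolding T_def N_def by auto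
    have g2: "min (W v n N Y) (W v n T X) \<le> W v n T (Y * X)" by (rule W_mult_gen[OF dv Y X h1' h2' h3'])
    show "vM v n (X * Y) \<ge> min (vM v n X) (vMt v n Y)
      \<and> vM v n (Y * X) \<ge> min (vM v n X) (vMt v n Y)"
      unfolding vMT vMN using g1 g2 by (simp add: min.commute)
  qed
  have P7: "nilpotent_mat X \<and> nilpotent_mat Y \<longrightarrow>
        vM v n (X * Y) \<ge> min (vMt v n X) (vMt v n Y)"
  proof
    assume nn: "nilpotent_mat X \<and> nilpotent_mat Y"
    have h1: "(\<forall>i<n. X $$ (i, i) = 0) \<or> (\<forall>i j. T i j \<longrightarrow> N i j)" using nil_diag0[OF X n1] nn by simp
    have h2: "(\<forall>i<n. Y $$ (i, i) = 0) \<or> (\<forall>i j. T i j \<longrightarrow> N i j)" using nil_diag0[OF Y n1] nn by simp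
    have h3: "\<forall>i k j. T i j \<and> i < k \<and> k < j \<and> j < n \<longrightarrow> N i k \<and> N k j" unfolding T_def N_def by auto
    show "vM v n (X * Y) \<ge> min (vMt v n X) (vMt v n Y)"
      unfolding vMT vMN by (rule W_mult_gen[OF dv X Y h1 h2 h3])
  qed
  have P89: "invertible_mat X \<Longrightarrow> \<exists>e. (\<forall>i<n. X $$ (i, i) = e) \<and> v e = 0"
  proof -
    assume iX: "invertible_mat X"
    obtain c :: nat where c: "\<forall>i<n. X $$ (i, i) = of_nat c" "(of_nat c :: 'a) \<noteq> 0"
      using inv_diag_nz[OF X n1 iX] by blast
    have "v (of_nat c) = 0" using dv_nat0[OF dv p char c(2)] .
    then show ?thesis using c by blast
  qed
  have P8: "invertible_mat X \<and> vM v n X > vM v n Y \<longrightarrow>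
        vM v n (X * Y) = vM v n Y \<and> vM v n (Y * X) = vM v n Y"
  proof
    assume a: "invertible_mat X \<and> vM v n X > vM v n Y"
    obtain e where e: "\<forall>i<n. X $$ (i, i) = e" "v e = 0" using P89 a by blast
    show "vM v n (X * Y) = vM v n Y \<and> vM v n (Y * X) = vM v n Y"
      using W_mult_strict[OF dv X Y e ST] a unfolding vMT by blast
  qed
  have P9: "invertible_mat X \<and> vMt v n X > vMt v n Y \<longrightarrow>
        vMt v n (X * Y) = vMt v n Y \<and> vMt v n (Y * X) = vMt v n Y"
  proof
    assume a: "invertible_mat X \<and> vMt v n X > vMt v n Y"
    obtain e where e: "\<forall>i<n. X $$ (i, i) = e" "v e = 0" using P89 a by blast
    show "vMt v n (X * Y) = vMt v n Y \<and> vMt v n (Y * X) = vMt v n Y"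
      using W_mult_strict[OF dv X Y e SN] a unfolding vMN by blast
  qed
  have P10: "\<forall>B \<in> carrier_mat n n. X * B = 1\<^sub>m n \<and> B * X = 1\<^sub>m n \<longrightarrow>
        vM v n B = vM v n X \<and> vMt v n B = vMt v n X"
  proof (intro ballI impI)
    fix B :: "'a mat" assume BC: "B \<in> carrier_mat n n" and inv: "X * B = 1\<^sub>m n \<and> B * X = 1\<^sub>m n"
    have "invertible_mat X" unfolding invertible_mat_def inverts_mat_def using inv XC BC by auto
    then obtain e where e: "\<forall>i<n. X $$ (i, i) = e" "v e = 0" using P89 by blast
    show "vM v n B = vM v n X \<and> vMt v n B = vMt v n X"
      unfolding vMT vMN using W_inv[OF dv X BC _ _ e ST] W_inv[OF dv X BC _ _ e SN] inv by blast
  qed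
  have P11: "\<forall>(c::int) (\<gamma>::'a). nilpotent_mat X \<and> v \<gamma> = ereal (of_int c) \<longrightarrow>
        vM v n (\<gamma> \<cdot>\<^sub>m X)
          \<ge> ereal (min (of_int c / real (n - 1)) (of_int c)) + vM v n X
      \<and> (n \<ge> 3 \<longrightarrow> vMt v n (\<gamma> \<cdot>\<^sub>m X)
          \<ge> ereal (min (of_int c / real (n - 2)) (of_int c)) + vMt v n X)"
  proof (intro allI impI conjI)
    fix c :: int and \<gamma> :: 'a assume a: "nilpotent_mat X \<and> v \<gamma> = ereal (of_int c)"
    have hb1: "\<forall>i j. i < j \<and> j < n \<and> T i j \<longrightarrow> real (j - i) * min (of_int c / real (n - 1)) (of_int c) \<le> of_int c"
    proof (intro allI impI)
      fix i j assume ij: "i < j \<and> j < n \<and> T i j"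
      then have "(1::real) \<le> real (j - i)" "real (j - i) \<le> real (n - 1)" by auto
      then show "real (j - i) * min (of_int c / real (n - 1)) (of_int c) \<le> of_int c" by (rule R1)
    qed
    show "vM v n (\<gamma> \<cdot>\<^sub>m X) \<ge> ereal (min (of_int c / real (n - 1)) (of_int c)) + vM v n X"
      unfolding vMT using W_smult[OF dv XC _ hb1] a by blast
    assume n3: "n \<ge> 3"
    have hb2: "\<forall>i j. i < j \<and> j < n \<and> N i j \<longrightarrow> real (j - i) * min (of_int c / real (n - 2)) (of_int c) \<le> of_int c"
    proof (intro allI impI)
      fix i j assume ij: "i < j \<and> j < n \<and> N i j"
      then have "j - i \<le> n - 2" unfolding N_def by auto
      then have "(1::real) \<le> real (j - i)" "real (j - i) \<le> real (n - 2)" using ij by auto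
      then show "real (j - i) * min (of_int c / real (n - 2)) (of_int c) \<le> of_int c" by (rule R1)
    qed
    show "vMt v n (\<gamma> \<cdot>\<^sub>m X) \<ge> ereal (min (of_int c / real (n - 2)) (of_int c)) + vMt v n X"
      unfolding vMN using W_smult[OF dv XC _ hb2] a by blast
  qed
  show ?thesis by (intro conjI P1 P2 P3 P3b P4 P5 P6 P7 P8 P9 P10 P11)
qed

end
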